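(* (a) For every $D$-norm $\|\cdot\|_D$ there is a function $g:[0,1]^2\to[0,\infty)$ such that (i) $g(s,\cdot)$ is continuous on $[0,1]$ for every $s\in[0,1]$, (ii) $g(\cdot,t)$ is a Lebesgue probability density on $[0,1]$ for every $t\in[0,1]$, (iii) $\int_0^1\sup_{t\in[0,1]} g(s,t)\,ds<\infty$, and \[ \|f\|_D=\int_{[0,1]}\sup_{t\in[0,1]}\big(|f(t)|\,g(s,t)\big)\,ds,\qquad f\in E[0,1]; \] in particular $\|\cdot\|_D$ is generated by the process $(g(U,t))_{t\in[0,1]}$, where $U$ is uniformly distributed on $[0,1]$. (b) Conversely, if $g:[0,1]^2\to[0,\infty)$ satisfies (i), (ii) and (iii), then $f\mapsto\int_{[0,1]}\sup_{t\in[0,1]}\big(|f(t)|\,g(s,t)\big)\,ds$, $f\in E[0,1]$, is a $D$-norm.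
   Context: $E[0,1]$ denotes the set of all bounded real-valued functions on $[0,1]$ that have only finitely many discontinuities. $\bar C^+[0,1]$ denotes the set of non-negative continuous functions on $[0,1]$. A generator is a stochastic process $\mathbf{Z}=(Z_t)_{t\in[0,1]}$ with sample paths in $\bar C^+[0,1]$ such that $E(Z_t)=1$ for every $t\in[0,1]$ and $E(\sup_{t\in[0,1]}Z_t)<\infty$. A $D$-norm is a function on $E[0,1]$ of the form $\|f\|_D=E\big(\sup_{t\in[0,1]}|f(t)Z_t|\big)$, $f\in E[0,1]$, for some generator $\mathbf{Z}$; $\mathbf{Z}$ is then said to generate this $D$-norm. A function $g$ satisfying (i)–(iii) is called a family of spectral densities $(g(\cdot,t))_{t\in[0,1]}$. *)

theory Defs
  imports "HOL-Probability.Probability"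
begin

definition E01 :: "(real \<Rightarrow> real) set" where
  "E01 = {f. bounded (f ` {0..1}) \<and>
             finite {t \<in> {0..1}. \<not> continuous (at t within {0..1}) f}}"

definition generator :: "'a measure \<Rightarrow> ('a \<Rightarrow> real \<Rightarrow> real) \<Rightarrow> bool" where
  "generator M Z \<longleftrightarrow> prob_space M \<and>
     (\<forall>t\<in>{0..1}. (\<lambda>\<omega>. Z \<omega> t) \<in> borel_measurable M) \<and>
     (\<forall>\<omega>\<in>space M. continuous_on {0..1} (Z \<omega>) \<and> (\<forall>t\<in>{0..1}. Z \<omega> t \<ge> 0)) \<and>
     (\<forall>t\<in>{0..1}. integrable M (\<lambda>\<omega>. Z \<omega> t) \<and> integral\<^sup>L M (\<lambda>\<omega>. Z \<omega> t) = 1) \<and>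
     integrable M (\<lambda>\<omega>. SUP t\<in>{0..1}. Z \<omega> t)"

definition Dnorm :: "'a measure \<Rightarrow> ('a \<Rightarrow> real \<Rightarrow> real) \<Rightarrow> (real \<Rightarrow> real) \<Rightarrow> real" where
  "Dnorm M Z f = integral\<^sup>L M (\<lambda>\<omega>. SUP t\<in>{0..1}. \<bar>f t * Z \<omega> t\<bar>)"

text \<open>The underlying probability space is taken with sample space type real
  (every generator's law on C[0,1] can be realised on ([0,1], Lebesgue)).\<close>
definition is_Dnorm :: "((real \<Rightarrow> real) \<Rightarrow> real) \<Rightarrow> bool" where
  "is_Dnorm N \<longleftrightarrow> (\<exists>(M :: real measure) Z. generator M Z \<and> (\<forall>f\<in>E01. N f = Dnorm M Z f))"

definition spectral_densities :: "(real \<Rightarrow> real \<Rightarrow> real) \<Rightarrow> bool" where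
  "spectral_densities g \<longleftrightarrow>
     (\<forall>s\<in>{0..1}. \<forall>t\<in>{0..1}. g s t \<ge> 0) \<and>
     (\<forall>s\<in>{0..1}. continuous_on {0..1} (g s)) \<and>
     (\<forall>t\<in>{0..1}. integrable (lebesgue_on {0..1}) (\<lambda>s. g s t) \<and>
                 integral\<^sup>L (lebesgue_on {0..1}) (\<lambda>s. g s t) = 1) \<and>
     integrable (lebesgue_on {0..1}) (\<lambda>s. SUP t\<in>{0..1}. g s t)"

definition spectral_norm :: "(real \<Rightarrow> real \<Rightarrow> real) \<Rightarrow> (real \<Rightarrow> real) \<Rightarrow> real" where
  "spectral_norm g f = integral\<^sup>L (lebesgue_on {0..1}) (\<lambda>s. SUP t\<in>{0..1}. \<bar>f t\<bar> * g s t)"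

end

theory Submission
  imports Defs
begin

definition bitp :: "nat \<Rightarrow> real \<Rightarrow> bool" where
  "bitp n y \<longleftrightarrow> (\<exists>k::int. 4*k+1 \<le> 4^(Suc n)*y \<and> 4^(Suc n)*y < 4*k+2)"

lemma bitp_measurable[measurable]: "Measurable.pred borel (bitp n)"
  unfolding bitp_def by measurable

definition cd :: "(nat \<Rightarrow> bool) \<Rightarrow> real" where
  "cd c = (\<Sum>m. (if c m then 1 else 0) * (1/4::real)^Suc m)"

lemma cd_summable: "summable (\<lambda>m. (if c m then 1 else 0) * (1/4::real)^Suc m)"
  by (rule summable_comparison_test[of _ "\<lambda>m. (1/4::real)^Suc m"]) auto

lemma cd_init_int: "\<exists>K::int. 4^n * (\<Sum>m<n. (if c m then 1 else 0) * (1/4::real)^Suc m) = of_int K"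
proof (induction n)
  case 0 then show ?case by simp
next
  case (Suc n)
  then obtain K::int where K: "4^n * (\<Sum>m<n. (if c m then 1 else 0) * (1/4::real)^Suc m) = of_int K" by blast
  have "4^Suc n * (\<Sum>m<Suc n. (if c m then 1 else 0) * (1/4::real)^Suc m)
      = 4 * (4^n * (\<Sum>m<n. (if c m then 1 else 0) * (1/4::real)^Suc m)) + (if c n then 1 else 0)"
    by (simp add: algebra_simps power_mult_distrib[symmetric])
  also have "\<dots> = of_int (4*K + (if c n then 1 else 0))" using K by simp
  finally show ?case by blast
qed

lemma cd_bit: "bitp n (cd c) \<longleftrightarrow> c n"
proof -
  let ?f = "\<lambda>m. (if c m then 1 else 0) * (1/4::real)^Suc m"
  have s: "summable ?f" by (rule cd_summable)
  have split: "cd c = (\<Sum>i. ?f (i + Suc n)) + (\<Sum>m<Suc n. ?f m)"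
    unfolding cd_def by (rule suminf_split_initial_segment[OF s])
  obtain K::int where K: "4^n * (\<Sum>m<n. ?f m) = of_int K" using cd_init_int by blast
  have init: "4^Suc n * (\<Sum>m<Suc n. ?f m) = of_int (4*K) + (if c n then 1 else 0)"
    using K by (simp add: algebra_simps power_mult_distrib[symmetric])
  define T where "T = 4^Suc n * (\<Sum>i. ?f (i + Suc n))"
  have s2: "summable (\<lambda>i. ?f (i + Suc n))" by (rule summable_ignore_initial_segment[OF s])
  have T0: "0 \<le> T" unfolding T_def by (intro mult_nonneg_nonneg suminf_nonneg s2) auto
  have "(\<Sum>i. ?f (i + Suc n)) \<le> (\<Sum>i. (1/4::real)^Suc (i + Suc n))"
    by (intro suminf_le s2) (auto intro: summable_mult2 simp: power_add)
  also have "(\<Sum>i. (1/4::real)^Suc (i + Suc n)) = (1/4)^Suc n * (\<Sum>i. (1/4::real)^Suc i)"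
    by (subst suminf_mult[symmetric]) (auto simp: power_add mult_ac)
  also have "(\<Sum>i. (1/4::real)^Suc i) = 1/3"
  proof -
    have "(\<Sum>i. (1/4::real)^Suc i) = (\<Sum>i. (1/4) * (1/4::real)^i)" by simp
    also have "\<dots> = (1/4) * (\<Sum>i. (1/4::real)^i)"
      by (rule suminf_mult) (rule summable_geometric, simp)
    also have "(\<Sum>i. (1/4::real)^i) = 4/3" by (subst suminf_geometric) auto
    finally show ?thesis by simp
  qed
  finally have T1: "T \<le> 1/3" unfolding T_def by (simp add: field_simps power_mult_distrib[symmetric])
  have eq: "4^Suc n * cd c = of_int (4*K) + (if c n then 1 else 0) + T"
    unfolding split T_def using init by (simp add: algebra_simps)
  show ?thesis
  proof
    assume "bitp n (cd c)"
    then obtain k::int where k: "4*real_of_int k+1 \<le> 4^(Suc n)*cd c" "4^(Suc n)*cd c < 4*real_of_int k+2" unfolding bitp_def by blast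
    show "c n"
    proof (rule ccontr)
      assume "\<not> c n"
      with eq k T0 T1 have a: "4*real_of_int k+1 \<le> 4*real_of_int K + T" "4*real_of_int K + T < 4*real_of_int k+2" by auto
      from a T0 T1 have "of_int (4*k) < (of_int (4*K) :: real)" by linarith
      hence "k < K" by simp
      hence "4*k + 4 \<le> 4*K" by simp
      hence "real_of_int (4*k+4) \<le> of_int (4*K)" by (simp only: of_int_le_iff)
      with a T0 T1 show False by simp
    qed
  next
    assume "c n"
    then show "bitp n (cd c)" unfolding bitp_def using eq T0 T1
      by (intro exI[of _ K]) simp
  qed
qed

definition Q01 :: "real set" where "Q01 = \<rat> \<inter> {0..1}"

lemma countable_Q01[simp]: "countable Q01"
  unfolding Q01_def by (intro countable_Int1 countable_rat)

definition rr :: "nat \<Rightarrow> real" where "rr j = \<bar>from_nat_into (\<rat>::real set) j\<bar>"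

lemma rr_nonneg: "0 \<le> rr j" unfolding rr_def by simp

lemma rr_dense: assumes "a < b" "0 \<le> a" shows "\<exists>j. a < rr j \<and> rr j < b"
proof -
  obtain q where q: "q \<in> \<rat>" "a < q" "q < b" using Rats_dense_in_real[OF assms(1)] by blast
  obtain j where "from_nat_into (\<rat>::real set) j = q" using from_nat_into_surj[OF countable_rat q(1)] by blast
  then have "rr j = q" using q assms unfolding rr_def by simp
  then show ?thesis using q by blast
qed

lemma sup_rr: assumes "0 \<le> (v::real)" shows "(SUP j. if rr j < v then rr j else 0) = v"
proof (rule antisym)
  show "(SUP j. if rr j < v then rr j else 0) \<le> v"
    using assms by (intro cSUP_least) auto
  have bdd: "bdd_above (range (\<lambda>j. if rr j < v then rr j else 0))"
    using assms by (intro bdd_aboveI[of _ v]) auto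
  show "v \<le> (SUP j. if rr j < v then rr j else 0)"
  proof (rule dense_le)
    fix e assume e: "e < v"
    show "e \<le> (SUP j. if rr j < v then rr j else 0)"
    proof (cases "e < 0")
      case True
      have "0 \<le> (if rr 0 < v then rr 0 else 0)" using rr_nonneg[of 0] by simp
      also have "\<dots> \<le> (SUP j. if rr j < v then rr j else 0)" by (rule cSUP_upper[OF _ bdd]) simp
      finally show ?thesis using True by simp
    next
      case False
      then obtain j where j: "e < rr j" "rr j < v" using rr_dense[OF e] by auto
      have "rr j = (if rr j < v then rr j else 0)" using j by simp
      also have "\<dots> \<le> (SUP j. if rr j < v then rr j else 0)" by (rule cSUP_upper[OF _ bdd]) simp
      finally show ?thesis using j by simp
    qed
  qed
qed

lemma SUP_real_neg: "(SUP i\<in>I. F i :: real) = - (INF i\<in>I. - F i)"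
  by (simp add: Inf_real_def image_image)

lemma borel_measurable_cSUP_real[measurable (raw)]:
  fixes F :: "_ \<Rightarrow> _ \<Rightarrow> real"
  assumes [simp]: "countable I"
  assumes F[measurable]: "\<And>i. i \<in> I \<Longrightarrow> F i \<in> borel_measurable M"
  shows "(\<lambda>x. SUP i\<in>I. F i x) \<in> borel_measurable M"
  unfolding SUP_real_neg by measurable

definition wv :: "real \<Rightarrow> real \<Rightarrow> real" where
  "wv y t = (SUP j. (if bitp (prod_encode (to_nat_on Q01 t, j)) y then rr j else 0))"

lemma wv_measurable[measurable]: "(\<lambda>y. wv y t) \<in> borel_measurable borel"
  unfolding wv_def by measurable

lemma wv_true: assumes "0 \<le> v" "\<And>j. bitp (prod_encode (to_nat_on Q01 t, j)) y \<longleftrightarrow> rr j < v"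
  shows "wv y t = v"
  unfolding wv_def assms(2) using sup_rr[OF assms(1)] .

definition Dy :: "nat \<Rightarrow> real \<Rightarrow> real" where "Dy n t = real_of_int \<lfloor>2^n*t\<rfloor> / 2^n"

lemma Dy_Q01: assumes "t \<in> {0..1}" shows "Dy n t \<in> Q01"
proof -
  have "real_of_int \<lfloor>2^n*t\<rfloor> \<le> 2^n*t" by (rule of_int_floor_le)
  hence a: "Dy n t \<le> t" unfolding Dy_def by (simp add: field_simps)
  have "0 \<le> real_of_int \<lfloor>2^n*t\<rfloor>" using assms by simp
  hence "0 \<le> Dy n t" unfolding Dy_def by simp
  moreover have "Dy n t \<in> \<rat>" unfolding Dy_def by simp
  ultimately show ?thesis using a assms unfolding Q01_def by auto
qed

lemma Dy_lim: "(\<lambda>n. Dy n t) \<longlonglongrightarrow> t"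
proof (rule tendsto_sandwich[of "\<lambda>n. t - (1/2)^n" _ _ "\<lambda>n. t"])
  show "\<forall>\<^sub>F n in sequentially. t - (1/2)^n \<le> Dy n t"
  proof (intro always_eventually allI)
    fix n :: nat
    have "(2^n*t - 1)/2^n \<le> real_of_int \<lfloor>2^n*t\<rfloor>/2^n" by (rule divide_right_mono) (linarith, simp)
    then show "t - (1/2)^n \<le> Dy n t" unfolding Dy_def by (simp add: power_one_over diff_divide_distrib)
  qed
  show "\<forall>\<^sub>F n in sequentially. Dy n t \<le> t"
  proof (intro always_eventually allI)
    fix n :: nat
    have "real_of_int \<lfloor>2^n*t\<rfloor> \<le> 2^n*t" by (rule of_int_floor_le)
    then show "Dy n t \<le> t" unfolding Dy_def by (simp add: field_simps)
  qed
  show "(\<lambda>n. t - (1/2::real)^n) \<longlonglongrightarrow> t"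
    by (rule tendsto_eq_intros LIMSEQ_power_zero | simp)+
qed simp

lemma closure_Q01: "closure Q01 = {0..1}"
proof
  show "closure Q01 \<subseteq> {0..1}" unfolding Q01_def by (intro closure_minimal) auto
  show "{0..1} \<subseteq> closure Q01"
  proof
    fix t :: real assume "t \<in> {0..1}"
    then show "t \<in> closure Q01" unfolding closure_sequential using Dy_Q01 Dy_lim by (intro exI[of _ "\<lambda>n. Dy n t"]) blast
  qed
qed

definition ghat :: "real \<Rightarrow> real \<Rightarrow> real" where "ghat y t = lim (\<lambda>n. wv y (Dy n t))"

lemma ghat_measurable[measurable]: "(\<lambda>y. ghat y t) \<in> borel_measurable borel"
  unfolding ghat_def by measurable

definition good :: "real \<Rightarrow> bool" where
  "good y \<longleftrightarrow> (\<forall>p\<in>Q01. 0 \<le> wv y p) \<and>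
     (\<forall>m::nat. \<exists>k::nat. \<forall>p\<in>Q01. \<forall>p'\<in>Q01. \<bar>p - p'\<bar> < 1/Suc k \<longrightarrow> \<bar>wv y p - wv y p'\<bar> < 1/Suc m)"

lemma good_measurable[measurable]: "Measurable.pred borel good"
  unfolding good_def by measurable

definition GG :: "real \<Rightarrow> real \<Rightarrow> real" where "GG y t = (if good y then ghat y t else 1)"

lemma GG_measurable[measurable]: "(\<lambda>y. GG y t) \<in> borel_measurable borel"
  unfolding GG_def by measurable

lemma good_uc: assumes "good y" shows "uniformly_continuous_on Q01 (wv y)"
  unfolding uniformly_continuous_on_def
proof (intro allI impI)
  fix e :: real assume "0 < e"
  then obtain m where m: "inverse (real (Suc m)) < e" using reals_Archimedean by blast
  obtain k where k: "\<forall>p\<in>Q01. \<forall>p'\<in>Q01. \<bar>p - p'\<bar> < 1/Suc k \<longrightarrow> \<bar>wv y p - wv y p'\<bar> < 1/Suc m"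
    using assms unfolding good_def by blast
  show "\<exists>d>0. \<forall>x\<in>Q01. \<forall>x'\<in>Q01. dist x' x < d \<longrightarrow> dist (wv y x') (wv y x) < e"
  proof (intro exI[of _ "1/Suc k"] conjI ballI impI)
    fix x x' assume "x \<in> Q01" "x' \<in> Q01" "dist x' x < 1/Suc k"
    then have "\<bar>wv y x' - wv y x\<bar> < 1/Suc m" using k by (auto simp: dist_real_def)
    then show "dist (wv y x') (wv y x) < e" using m by (simp add: dist_real_def inverse_eq_divide)
  qed simp
qed

lemma ghat_eq: assumes "continuous_on {0..1} h" "\<forall>p\<in>Q01. wv y p = h p" "t \<in> {0..1}"
  shows "ghat y t = h t"
proof -
  have "(\<lambda>n. h (Dy n t)) \<longlonglongrightarrow> h t"
    by (rule continuous_on_tendsto_compose[OF assms(1) Dy_lim assms(3)])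
       (use Dy_Q01[OF assms(3)] in \<open>auto simp: Q01_def\<close>)
  moreover have "wv y (Dy n t) = h (Dy n t)" for n using assms(2) Dy_Q01[OF assms(3)] by blast
  ultimately show ?thesis unfolding ghat_def by (simp add: limI)
qed

lemma good_ext: assumes "good y"
  shows "continuous_on {0..1} (GG y) \<and> (\<forall>t\<in>{0..1}. 0 \<le> GG y t)"
proof -
  obtain h where h: "uniformly_continuous_on (closure Q01) h" "\<And>x. x \<in> Q01 \<Longrightarrow> wv y x = h x"
    using uniformly_continuous_on_extension_on_closure[OF good_uc[OF assms]] by metis
  have hc: "continuous_on {0..1} h" using h(1) closure_Q01 uniformly_continuous_imp_continuous by metis
  have eq: "GG y t = h t" if "t \<in> {0..1}" for t
    unfolding GG_def using assms ghat_eq[OF hc _ that] h(2) by auto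
  have nn: "0 \<le> h t" if t: "t \<in> {0..1}" for t
  proof -
    have "(\<lambda>n. h (Dy n t)) \<longlonglongrightarrow> h t"
      by (rule continuous_on_tendsto_compose[OF hc Dy_lim t])
         (use Dy_Q01[OF t] in \<open>auto simp: Q01_def\<close>)
    moreover have "0 \<le> h (Dy n t)" for n using assms Dy_Q01[OF t] h(2) unfolding good_def by metis
    ultimately show ?thesis by (intro LIMSEQ_le_const[of "\<lambda>n. h (Dy n t)"]) auto
  qed
  show ?thesis using continuous_on_eq[OF hc] eq nn by (auto)
qed

lemma GG_cont: "continuous_on {0..1} (GG y)" and GG_nonneg: "t \<in> {0..1} \<Longrightarrow> 0 \<le> GG y t"
proof -
  show "continuous_on {0..1} (GG y)"
  proof (cases "good y")
    case True then show ?thesis using good_ext by blast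
  next
    case False then have "GG y = (\<lambda>t. 1)" by (auto simp: GG_def)
    then show ?thesis by simp
  qed
  show "t \<in> {0..1} \<Longrightarrow> 0 \<le> GG y t" using good_ext[of y] by (cases "good y") (auto simp: GG_def)
qed

lemma GG_true: assumes "continuous_on {0..1} h" "\<forall>t\<in>{0..1}. 0 \<le> h t" "\<forall>p\<in>Q01. wv y p = h p"
  shows "\<forall>t\<in>{0..1}. GG y t = h t"
proof -
  have Q: "Q01 \<subseteq> {0..1}" unfolding Q01_def by auto
  have uc: "uniformly_continuous_on {0..1} h" using assms(1) compact_uniformly_continuous by blast
  have "good y" unfolding good_def
  proof (intro conjI ballI allI)
    fix p assume "p \<in> Q01" then show "0 \<le> wv y p" using assms Q by auto
  next
    fix m :: nat
    obtain d where d: "d > 0" "\<forall>x\<in>{0..1}. \<forall>x'\<in>{0..1}. dist x' x < d \<longrightarrow> dist (h x') (h x) < 1/Suc m"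
      using uc unfolding uniformly_continuous_on_def by (metis of_nat_0_less_iff zero_less_Suc divide_pos_pos zero_less_one)
    obtain k where k: "inverse (real (Suc k)) < d" using reals_Archimedean d(1) by blast
    show "\<exists>k. \<forall>p\<in>Q01. \<forall>p'\<in>Q01. \<bar>p - p'\<bar> < 1/Suc k \<longrightarrow> \<bar>wv y p - wv y p'\<bar> < 1/Suc m"
    proof (intro exI[of _ k] ballI impI)
      fix p p' assume p: "p \<in> Q01" "p' \<in> Q01" "\<bar>p - p'\<bar> < 1/Suc k"
      then have "dist p p' < d" using k by (simp add: dist_real_def inverse_eq_divide)
      then have "dist (h p) (h p') < 1/Suc m" using d(2) p Q by blast
      then show "\<bar>wv y p - wv y p'\<bar> < 1/Suc m" using assms(3) p by (simp add: dist_real_def)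
    qed
  qed
  then show ?thesis unfolding GG_def using ghat_eq[OF assms(1)] assms(3) by auto
qed

definition Fd :: "(real \<Rightarrow> real) \<Rightarrow> real set" where
  "Fd f = {t \<in> {0..1}. \<not> continuous (at t within {0..1}) f}"

definition Tc :: "(real \<Rightarrow> real) \<Rightarrow> real set" where "Tc f = (Q01 - Fd f) \<union> Fd f"

lemma Tc_sub: "Tc f \<subseteq> {0..1}" unfolding Tc_def Fd_def Q01_def by auto
lemma Tc_0: "0 \<in> Tc f" unfolding Tc_def Q01_def by auto
lemma Tc_countable: "f \<in> E01 \<Longrightarrow> countable (Tc f)"
  unfolding Tc_def E01_def Fd_def by (auto intro: countable_finite)

lemma sup_countable:
  assumes f: "f \<in> E01" and hc: "continuous_on {0..1} h" and hn: "\<forall>t\<in>{0..1}. 0 \<le> h t"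
  shows "(SUP t\<in>{0..1}. \<bar>f t\<bar> * h t) = (SUP t\<in>Tc f. \<bar>f t\<bar> * h t)"
proof -
  obtain B where B: "\<And>t. t \<in> {0..1} \<Longrightarrow> \<bar>f t\<bar> \<le> B"
    using f unfolding E01_def bounded_real by (auto simp del: atLeastAtMost_iff)
  obtain C where C: "\<And>t. t \<in> {0..1} \<Longrightarrow> \<bar>h t\<bar> \<le> C"
    using compact_imp_bounded[OF compact_continuous_image[OF hc compact_Icc]] unfolding bounded_real by (auto simp del: atLeastAtMost_iff)
  have bdd: "bdd_above ((\<lambda>t. \<bar>f t\<bar> * h t) ` {0..1})"
  proof (rule bdd_aboveI2)
    fix t :: real assume t: "t \<in> {0..1}"
    have "\<bar>f t\<bar> * h t \<le> \<bar>\<bar>f t\<bar> * h t\<bar>" by simp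
    also have "\<dots> = \<bar>f t\<bar> * \<bar>h t\<bar>" by (simp add: abs_mult)
    also have "\<dots> \<le> B * C" using B[OF t] C[OF t] by (intro mult_mono) auto
    finally show "\<bar>f t\<bar> * h t \<le> B * C" .
  qed
  have bddT: "bdd_above ((\<lambda>t. \<bar>f t\<bar> * h t) ` Tc f)"
    using bdd Tc_sub by (meson bdd_above_mono image_mono)
  show ?thesis
  proof (rule antisym)
    show "(SUP t\<in>Tc f. \<bar>f t\<bar> * h t) \<le> (SUP t\<in>{0..1}. \<bar>f t\<bar> * h t)"
      using Tc_0 Tc_sub bdd by (intro cSUP_subset_mono) auto
    show "(SUP t\<in>{0..1}. \<bar>f t\<bar> * h t) \<le> (SUP t\<in>Tc f. \<bar>f t\<bar> * h t)"
    proof (rule cSUP_least)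
      show "{0..1::real} \<noteq> {}" by simp
      fix t :: real assume t: "t \<in> {0..1}"
      show "\<bar>f t\<bar> * h t \<le> (SUP t\<in>Tc f. \<bar>f t\<bar> * h t)"
      proof (cases "t \<in> Fd f")
        case True
        then have "t \<in> Tc f" unfolding Tc_def by auto
        then show ?thesis by (rule cSUP_upper[OF _ bddT])
      next
        case False
        then have fc: "continuous (at t within {0..1}) f" using t unfolding Fd_def by auto
        have hct: "continuous (at t within {0..1}) h" using hc t continuous_on_eq_continuous_within by blast
        have phi: "continuous (at t within {0..1}) (\<lambda>t. \<bar>f t\<bar> * h t)"
          by (intro continuous_intros fc hct)
        have lim: "(\<lambda>n. \<bar>f (Dy n t)\<bar> * h (Dy n t)) \<longlonglongrightarrow> \<bar>f t\<bar> * h t"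
          by (rule continuous_within_tendsto_compose'[OF phi _ Dy_lim])
             (use Dy_Q01[OF t] in \<open>auto simp: Q01_def\<close>)
        have fin: "finite (Fd f)" using f unfolding E01_def Fd_def by auto
        have "open (- Fd f)" using finite_imp_closed[OF fin] by (simp add: open_Compl)
        then have ev: "eventually (\<lambda>n. Dy n t \<in> - Fd f) sequentially"
          using False by (intro topological_tendstoD[OF Dy_lim]) auto
        have "eventually (\<lambda>n. \<bar>f (Dy n t)\<bar> * h (Dy n t) \<le> (SUP t\<in>Tc f. \<bar>f t\<bar> * h t)) sequentially"
        proof (rule eventually_mono[OF ev])
          fix n assume "Dy n t \<in> - Fd f"
          then have "Dy n t \<in> Tc f" using Dy_Q01[OF t] unfolding Tc_def by auto
          then show "\<bar>f (Dy n t)\<bar> * h (Dy n t) \<le> (SUP t\<in>Tc f. \<bar>f t\<bar> * h t)"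
            by (rule cSUP_upper[OF _ bddT])
        qed
        then show ?thesis by (rule tendsto_upperbound[OF lim]) simp
      qed
    qed
  qed
qed

definition Kf :: "(real \<Rightarrow> real) \<Rightarrow> real \<Rightarrow> real" where
  "Kf f y = (SUP t\<in>{0..1}. \<bar>f t\<bar> * GG y t)"

lemma Kf_measurable: assumes "f \<in> E01" shows "Kf f \<in> borel_measurable borel"
proof -
  have "Kf f = (\<lambda>y. SUP t\<in>Tc f. \<bar>f t\<bar> * GG y t)"
    unfolding Kf_def using sup_countable[OF assms GG_cont] GG_nonneg by auto
  also have "\<dots> \<in> borel_measurable borel"
    using Tc_countable[OF assms] by measurable
  finally show ?thesis .
qed

definition code :: "('a \<Rightarrow> real \<Rightarrow> real) \<Rightarrow> 'a \<Rightarrow> real" where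
  "code Z \<omega> = cd (\<lambda>m. rr (snd (prod_decode m)) < Z \<omega> (from_nat_into Q01 (fst (prod_decode m))))"

lemma Q01_ne: "Q01 \<noteq> {}" unfolding Q01_def by (auto intro!: exI[of _ 0])

lemma code_GG: assumes "continuous_on {0..1} (Z \<omega>)" "\<forall>t\<in>{0..1}. 0 \<le> Z \<omega> t"
  shows "\<forall>t\<in>{0..1}. GG (code Z \<omega>) t = Z \<omega> t"
proof (rule GG_true[OF assms], intro ballI)
  fix p assume p: "p \<in> Q01"
  then have "0 \<le> Z \<omega> p" using assms(2) unfolding Q01_def by auto
  then show "wv (code Z \<omega>) p = Z \<omega> p"
    by (rule wv_true) (simp add: code_def cd_bit p)
qed

lemma code_measurable:
  assumes "\<forall>t\<in>{0..1}. (\<lambda>\<omega>. Z \<omega> t) \<in> borel_measurable M"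
  shows "code Z \<in> borel_measurable M"
proof -
  have [measurable]: "(\<lambda>\<omega>. Z \<omega> (from_nat_into Q01 k)) \<in> borel_measurable M" for k
    using assms from_nat_into[OF Q01_ne, of k] unfolding Q01_def by auto
  show ?thesis unfolding code_def[abs_def] cd_def by measurable
qed

lemma distr_lebesgue_Q:
  fixes I :: "real \<Rightarrow> real"
  assumes I: "I \<in> borel_measurable (restrict_space borel {0<..<1})"
  defines "Q \<equiv> (\<lambda>s. if s \<in> {0<..<1} then I s else 0)"
  shows "Q \<in> borel_measurable borel"
    and "Q \<in> borel_measurable (lebesgue_on {0..1})"
    and "distr (lebesgue_on {0..1}) borel Q = distr (restrict_space lborel {0<..<1}) borel I"
proof -
  show Qm: "Q \<in> borel_measurable borel"
  proof -
    have e: "{x::real. 0 < x \<and> x < 1} = {0<..<1}" by auto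
    show ?thesis unfolding Q_def by (subst measurable_If_restrict_space_iff) (auto simp: e intro: I)
  qed
  show Ql: "Q \<in> borel_measurable (lebesgue_on {0..1})"
    by (rule measurable_restrict_space1) (rule measurable_completion, simp add: Qm)
  have Il: "I \<in> borel_measurable (restrict_space lborel {0<..<1})"
    using I by (simp add: measurable_def space_restrict_space sets_restrict_space)
  show "distr (lebesgue_on {0..1}) borel Q = distr (restrict_space lborel {0<..<1}) borel I"
  proof (rule measure_eqI)
    show "sets (distr (lebesgue_on {0..1}) borel Q) = sets (distr (restrict_space lborel {0<..<1}) borel I)"
      by simp
    fix A assume "A \<in> sets (distr (lebesgue_on {0..1}) borel Q)"
    then have A: "A \<in> sets borel" by simp
    define B where "B = Q -` A \<inter> {0..1}"
    define B' where "B' = I -` A \<inter> {0<..<1}"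
    have Bs: "B \<in> sets borel" unfolding B_def using Qm A by (auto intro: measurable_sets)
    have "B' = Q -` A \<inter> {0<..<1}" unfolding B'_def Q_def by auto
    then have Bs': "B' \<in> sets borel" using Qm A by (auto intro: measurable_sets)
    have "emeasure (distr (lebesgue_on {0..1}) borel Q) A = emeasure (lebesgue_on {0..1}) B"
      unfolding B_def by (subst emeasure_distr[OF Ql A]) simp
    also have "\<dots> = emeasure (completion lborel) B"
      by (rule emeasure_restrict_space) (auto simp: B_def)
    also have "\<dots> = emeasure lborel B"
      using Bs by (simp add: main_part_sets)
    also have "\<dots> = emeasure lborel B'"
    proof (rule emeasure_eq_AE)
      have "AE x in lborel. x \<notin> {0, 1::real}"
        by (rule AE_not_in) (simp add: finite_imp_null_set_lborel)
      then show "AE x in lborel. (x \<in> B) = (x \<in> B')"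
        by eventually_elim (auto simp: B_def B'_def Q_def)
    qed (use Bs Bs' in auto)
    also have "\<dots> = emeasure (restrict_space lborel {0<..<1}) B'"
      by (rule emeasure_restrict_space[symmetric]) (auto simp: B'_def)
    also have "\<dots> = emeasure (distr (restrict_space lborel {0<..<1}) borel I) A"
      unfolding B'_def by (subst emeasure_distr[OF Il A]) (simp add: space_restrict_space)
    finally show "emeasure (distr (lebesgue_on {0..1}) borel Q) A = emeasure (distr (restrict_space lborel {0<..<1}) borel I) A" .
  qed
qed

lemma prob_space_lebesgue01: "prob_space (lebesgue_on {0..1::real})"
proof (rule prob_spaceI)
  have "emeasure (lebesgue_on {0..1::real}) {0..1} = emeasure (completion lborel) {0..1::real}"
    by (rule emeasure_restrict_space) auto
  also have "\<dots> = 1" by (simp add: main_part_sets)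
  finally show "emeasure (lebesgue_on {0..1::real}) (space (lebesgue_on {0..1::real})) = 1" by simp
qed

lemma one_E01: "(\<lambda>_. 1) \<in> E01"
  unfolding E01_def by (auto simp: bounded_def)

lemma part_a:
  fixes M :: "'a measure" and Z
  assumes gen: "generator M Z"
  shows "\<exists>g. spectral_densities g \<and>
                 (\<forall>f\<in>E01. Dnorm M Z f = spectral_norm g f) \<and>
                 generator (lebesgue_on {0..1}) (\<lambda>s t. g s t) \<and>
                 (\<forall>f\<in>E01. Dnorm M Z f = Dnorm (lebesgue_on {0..1}) (\<lambda>s t. g s t) f)"
proof -
  from gen have P: "prob_space M" and Zm: "\<forall>t\<in>{0..1}. (\<lambda>\<omega>. Z \<omega> t) \<in> borel_measurable M"
    and Zc: "\<forall>\<omega>\<in>space M. continuous_on {0..1} (Z \<omega>) \<and> (\<forall>t\<in>{0..1}. Z \<omega> t \<ge> 0)"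
    and Zi: "\<forall>t\<in>{0..1}. integrable M (\<lambda>\<omega>. Z \<omega> t) \<and> integral\<^sup>L M (\<lambda>\<omega>. Z \<omega> t) = 1"
    and Zs: "integrable M (\<lambda>\<omega>. SUP t\<in>{0..1}. Z \<omega> t)"
    unfolding generator_def by auto
  have Cm: "code Z \<in> borel_measurable M" by (rule code_measurable[OF Zm])
  define \<nu> where "\<nu> = distr M borel (code Z)"
  have rd: "real_distribution \<nu>" unfolding \<nu>_def
    by (intro real_distribution.intro real_distribution_axioms.intro prob_space.prob_space_distr[OF P] Cm) simp
  have cdd: "cdf_distribution \<nu>" using rd by (simp add: cdf_distribution_def)
  define I where "I = (\<lambda>\<omega>::real. Inf {x. \<omega> \<le> cdf \<nu> x})"
  have Im: "I \<in> borel_measurable (restrict_space borel {0<..<1})" unfolding I_def by (rule cdf_distribution.measurable_CI[OF cdd])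
  have dI: "distr (restrict_space lborel {0<..<1}) borel I = \<nu>" unfolding I_def by (rule cdf_distribution.distr_I_eq_M[OF cdd])
  define Q where "Q = (\<lambda>s. if s \<in> {0<..<1} then I s else 0)"
  have Ql: "Q \<in> borel_measurable (lebesgue_on {0..1})" and dQ: "distr (lebesgue_on {0..1}) borel Q = \<nu>"
    using distr_lebesgue_Q[OF Im] dI unfolding Q_def by auto
  define g where "g = (\<lambda>s t. GG (Q s) t)"
  have int_eq: "integral\<^sup>L (lebesgue_on {0..1}) (\<lambda>s. K (Q s)) = integral\<^sup>L M (\<lambda>\<omega>. K (code Z \<omega>))"
    if K: "K \<in> borel_measurable borel" for K :: "real \<Rightarrow> real"
  proof -
    have "integral\<^sup>L (lebesgue_on {0..1}) (\<lambda>s. K (Q s)) = integral\<^sup>L \<nu> K"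
      using integral_distr[OF Ql K] dQ by simp
    also have "\<dots> = integral\<^sup>L M (\<lambda>\<omega>. K (code Z \<omega>))"
      unfolding \<nu>_def by (rule integral_distr[OF Cm K])
    finally show ?thesis .
  qed
  have intg_eq: "integrable (lebesgue_on {0..1}) (\<lambda>s. K (Q s)) \<longleftrightarrow> integrable M (\<lambda>\<omega>. K (code Z \<omega>))"
    if K: "K \<in> borel_measurable borel" for K :: "real \<Rightarrow> real"
  proof -
    have "integrable (lebesgue_on {0..1}) (\<lambda>s. K (Q s)) \<longleftrightarrow> integrable \<nu> K"
      using integrable_distr_eq[OF Ql K] dQ by simp
    also have "\<dots> \<longleftrightarrow> integrable M (\<lambda>\<omega>. K (code Z \<omega>))"
      unfolding \<nu>_def by (rule integrable_distr_eq[OF Cm K])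
    finally show ?thesis .
  qed
  have GZ: "GG (code Z \<omega>) t = Z \<omega> t" if "\<omega> \<in> space M" "t \<in> {0..1}" for \<omega> t
    using code_GG[of Z \<omega>] Zc that by auto
  have KZ: "Kf f (code Z \<omega>) = (SUP t\<in>{0..1}. \<bar>f t * Z \<omega> t\<bar>)" if "\<omega> \<in> space M" for f \<omega>
    unfolding Kf_def using GZ[OF that] Zc that by (intro SUP_cong) (auto simp: abs_mult)
  have Kg: "(SUP t\<in>{0..1}. \<bar>f t * g s t\<bar>) = Kf f (Q s)" for f s
    unfolding Kf_def g_def using GG_nonneg by (intro SUP_cong) (auto simp: abs_mult)
  have Kg': "(SUP t\<in>{0..1}. \<bar>f t\<bar> * g s t) = Kf f (Q s)" for f s
    unfolding Kf_def g_def by simp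
  have Kg1: "(SUP t\<in>{0..1}. g s t) = Kf (\<lambda>_. 1) (Q s)" for s
    unfolding Kf_def g_def by simp
  have Z1: "Kf (\<lambda>_. 1) (code Z \<omega>) = (SUP t\<in>{0..1}. Z \<omega> t)" if "\<omega> \<in> space M" for \<omega>
    unfolding KZ[OF that] using Zc that by (intro SUP_cong) auto
  have gi: "integrable (lebesgue_on {0..1}) (\<lambda>s. g s t) \<and> integral\<^sup>L (lebesgue_on {0..1}) (\<lambda>s. g s t) = 1"
    if t: "t \<in> {0..1}" for t
  proof
    have "integrable M (\<lambda>\<omega>. GG (code Z \<omega>) t)"
      using Zi t by (subst Bochner_Integration.integrable_cong[OF refl GZ]) auto
    then show "integrable (lebesgue_on {0..1}) (\<lambda>s. g s t)"
      unfolding g_def using intg_eq[of "\<lambda>y. GG y t"] by simp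
    have "integral\<^sup>L M (\<lambda>\<omega>. GG (code Z \<omega>) t) = 1"
      using Zi t by (subst Bochner_Integration.integral_cong[OF refl GZ]) auto
    then show "integral\<^sup>L (lebesgue_on {0..1}) (\<lambda>s. g s t) = 1"
      unfolding g_def using int_eq[of "\<lambda>y. GG y t"] by simp
  qed
  have si: "integrable (lebesgue_on {0..1}) (\<lambda>s. SUP t\<in>{0..1}. g s t)"
  proof -
    have "integrable M (\<lambda>\<omega>. Kf (\<lambda>_. 1) (code Z \<omega>))"
      using Zs by (subst Bochner_Integration.integrable_cong[OF refl Z1]) auto
    then show ?thesis unfolding Kg1 using intg_eq[OF Kf_measurable[OF one_E01]] by simp
  qed
  have dn: "Dnorm M Z f = spectral_norm g f" if f: "f \<in> E01" for f
  proof -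
    have "Dnorm M Z f = integral\<^sup>L M (\<lambda>\<omega>. Kf f (code Z \<omega>))"
      unfolding Dnorm_def by (rule Bochner_Integration.integral_cong[OF refl KZ[symmetric]])
    also have "\<dots> = integral\<^sup>L (lebesgue_on {0..1}) (\<lambda>s. Kf f (Q s))"
      by (rule int_eq[symmetric, OF Kf_measurable[OF f]])
    also have "\<dots> = spectral_norm g f" unfolding spectral_norm_def Kg' ..
    finally show ?thesis .
  qed
  have dn2: "spectral_norm g f = Dnorm (lebesgue_on {0..1}) (\<lambda>s t. g s t) f" for f
    unfolding spectral_norm_def Dnorm_def Kg Kg' ..
  have gm: "(\<lambda>s. g s t) \<in> borel_measurable (lebesgue_on {0..1})" for t
    unfolding g_def by (rule measurable_compose[OF Ql GG_measurable])
  have sd: "spectral_densities g"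
    unfolding spectral_densities_def using gi si GG_cont GG_nonneg unfolding g_def by auto
  have gen2: "generator (lebesgue_on {0..1}) (\<lambda>s t. g s t)"
    unfolding generator_def using prob_space_lebesgue01 gm gi si GG_cont GG_nonneg
    unfolding g_def by auto
  show ?thesis using sd dn dn2 gen2 by metis
qed

lemma part_b:
  assumes sd: "spectral_densities g"
  shows "is_Dnorm (spectral_norm g)"
proof -
  have gn: "\<forall>s\<in>{0..1}. \<forall>t\<in>{0..1}. g s t \<ge> 0" using sd unfolding spectral_densities_def by auto
  have gen: "generator (lebesgue_on {0..1}) g"
    unfolding generator_def using prob_space_lebesgue01 sd unfolding spectral_densities_def
    by (auto intro: borel_measurable_integrable)
  have "spectral_norm g f = Dnorm (lebesgue_on {0..1}) g f" for f
    unfolding spectral_norm_def Dnorm_def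
  proof (rule Bochner_Integration.integral_cong[OF refl])
    fix s assume s: "s \<in> space (lebesgue_on {0..1::real})"
    show "(SUP t\<in>{0..1}. \<bar>f t\<bar> * g s t) = (SUP t\<in>{0..1}. \<bar>f t * g s t\<bar>)"
      using gn s by (intro SUP_cong) (auto simp: abs_mult)
  qed
  then show ?thesis unfolding is_Dnorm_def using gen by blast
qed

theorem proposition3p3:
  shows "(\<forall>(M :: 'a measure) Z. generator M Z \<longrightarrow>
            (\<exists>g. spectral_densities g \<and>
                 (\<forall>f\<in>E01. Dnorm M Z f = spectral_norm g f) \<and>
                 generator (lebesgue_on {0..1}) (\<lambda>s t. g s t) \<and>
                 (\<forall>f\<in>E01. Dnorm M Z f = Dnorm (lebesgue_on {0..1}) (\<lambda>s t. g s t) f)))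
       \<and> (\<forall>g. spectral_densities g \<longrightarrow> is_Dnorm (spectral_norm g))"
  using part_a part_b by blast

end
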